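(* Let $p(t)=\sum_{k=0}^\infty a_kt^k$ be a power series with $0\le a_k<1$ for all $k\ge0$ and $\sum_{k=0}^\infty a_k=1$. Let $p^{[1]}(t)=p(t)$, $p^{[n+1]}(t)=p(p^{[n]}(t))$, and write $p^{[n]}(t)=\sum_{k=0}^\infty a_k^{[n]}t^k$, $a^{[n]}=\sup\{a_k^{[n]}: k\ge1\}$. Then $(a_0^{[n]})_{n\in\mathbb N}$ is monotone increasing, $(a^{[n]})_{n\in\mathbb N}$ is monotone decreasing, and $\lim_{n\to\infty}a^{[n]}=0$.
   Context: Composition is composition of formal power series; since the coefficients are nonnegative and sum to $1$, each $p^{[n]}$ is well defined, has nonnegative coefficients, and $\sum_k a_k^{[n]}=1$. "Monotone increasing/decreasing" means non-strict monotonicity. *)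

theory Defs
  imports "HOL-Analysis.Analysis" "HOL-Computational_Algebra.Formal_Power_Series"
begin

text \<open>This is well defined (convergent) when the
  coefficients of p and q are nonnegative and sum to 1.\<close>
definition fps_comp_gen :: "real fps \<Rightarrow> real fps \<Rightarrow> real fps" where
  "fps_comp_gen p q = Abs_fps (\<lambda>k. \<Sum>j. fps_nth p j * fps_nth (q ^ j) k)"

text \<open>Iterates: fps_iter p 1 = p, fps_iter p (n+1) = p(fps_iter p n).
  The value at 0 (identity series X) is never used by the statement.\<close>
fun fps_iter :: "real fps \<Rightarrow> nat \<Rightarrow> real fps" where
  "fps_iter p 0 = fps_X"
| "fps_iter p (Suc 0) = p"
| "fps_iter p (Suc (Suc n)) = fps_comp_gen p (fps_iter p (Suc n))"

definition sup_coeff :: "real fps \<Rightarrow> real" where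
  "sup_coeff q = (SUP k\<in>{1..}. fps_nth q k)"

end

theory Submission
  imports Defs "HOL-Probability.Probability_Mass_Function"
begin

definition addp :: "nat pmf \<Rightarrow> nat pmf \<Rightarrow> nat pmf" where
  "addp A B = bind_pmf A (\<lambda>a. map_pmf ((+) a) B)"

fun convpow :: "nat \<Rightarrow> nat pmf \<Rightarrow> nat pmf" where
  "convpow 0 X = return_pmf 0"
| "convpow (Suc j) X = addp X (convpow j X)"

lemma addp_alt: "addp A B = bind_pmf A (\<lambda>a. bind_pmf B (\<lambda>b. return_pmf (a + b)))"
  by (simp add: addp_def map_pmf_def)

lemma addp_assoc: "addp A (addp B C) = addp (addp A B) C"
  by (simp add: addp_alt bind_assoc_pmf bind_return_pmf add.assoc)

lemma addp_zero: "addp (return_pmf 0) B = B"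
  by (simp add: addp_alt bind_return_pmf bind_return_pmf')

lemma convpow_add: "convpow (a + b) X = addp (convpow a X) (convpow b X)"
  by (induction a) (simp_all add: addp_zero addp_assoc)

definition stepp :: "nat pmf \<Rightarrow> nat pmf \<Rightarrow> nat pmf" where
  "stepp P X = bind_pmf X (\<lambda>i. convpow i P)"

lemma stepp_addp: "stepp P (addp A B) = addp (stepp P A) (stepp P B)"
proof -
  have "stepp P (addp A B) = bind_pmf A (\<lambda>a. bind_pmf B (\<lambda>b. convpow (a+b) P))"
    by (simp add: stepp_def addp_alt bind_assoc_pmf bind_return_pmf)
  also have "\<dots> = bind_pmf A (\<lambda>a. bind_pmf B (\<lambda>b. bind_pmf (convpow a P) (\<lambda>x. bind_pmf (convpow b P) (\<lambda>y. return_pmf (x+y)))))"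
    by (simp add: convpow_add addp_alt)
  also have "\<dots> = bind_pmf A (\<lambda>a. bind_pmf (convpow a P) (\<lambda>x. bind_pmf B (\<lambda>b. bind_pmf (convpow b P) (\<lambda>y. return_pmf (x+y)))))"
    by (subst bind_commute_pmf) (rule refl)
  also have "\<dots> = addp (stepp P A) (stepp P B)"
    by (simp add: stepp_def addp_alt bind_assoc_pmf)
  finally show ?thesis .
qed

lemma stepp_convpow: "stepp P (convpow j X) = convpow j (stepp P X)"
proof (induction j)
  case 0
  then show ?case by (simp add: stepp_def bind_return_pmf)
next
  case (Suc j)
  then show ?case by (simp add: stepp_addp)
qed

lemma addp_zero_right: "addp A (return_pmf 0) = A"
  by (simp add: addp_alt bind_return_pmf bind_return_pmf')

lemma convpow_one: "convpow (Suc 0) X = X"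
  by (simp add: addp_alt bind_return_pmf bind_return_pmf')

lemma convpow_return1: "convpow j (return_pmf (Suc 0)) = return_pmf j"
  by (induction j) (simp_all add: addp_alt bind_return_pmf)

fun Zp :: "nat pmf \<Rightarrow> nat \<Rightarrow> nat pmf" where
  "Zp P 0 = return_pmf 1"
| "Zp P (Suc n) = bind_pmf P (\<lambda>j. convpow j (Zp P n))"

lemma Zp_inner: "Zp P (Suc n) = stepp P (Zp P n)"
proof (induction n)
  case 0
  then show ?case by (simp add: convpow_return1 bind_return_pmf' stepp_def bind_return_pmf addp_zero_right)
next
  case (Suc n)
  have "Zp P (Suc (Suc n)) = bind_pmf P (\<lambda>j. convpow j (stepp P (Zp P n)))"
    by (subst Zp.simps(2)) (simp only: Suc.IH)
  also have "\<dots> = bind_pmf P (\<lambda>j. stepp P (convpow j (Zp P n)))"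
    by (simp only: stepp_convpow)
  also have "\<dots> = stepp P (bind_pmf P (\<lambda>j. convpow j (Zp P n)))"
    by (simp add: stepp_def bind_assoc_pmf)
  also have "\<dots> = stepp P (Zp P (Suc n))"
    by simp
  finally show ?case .
qed

lemma integrable_pmf_bounded:
  fixes h :: "'a \<Rightarrow> real"
  assumes "\<And>x. \<bar>h x\<bar> \<le> B"
  shows "integrable (measure_pmf X) h"
  by (rule measure_pmf.integrable_const_bound[where B=B]) (use assms in auto)

lemma pmf_map_plus: "pmf (map_pmf ((+) (a::nat)) B) k = (if a \<le> k then pmf B (k - a) else 0)"
proof (cases "a \<le> k")
  case True
  have "pmf (map_pmf ((+) a) B) (a + (k - a)) = pmf B (k - a)"
    by (rule pmf_map_inj') (auto simp: inj_def)
  with True show ?thesis by simp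
next
  case False
  then show ?thesis by (subst pmf_map_outside) auto
qed

lemma pmf_addp: "pmf (addp A B) k = (\<Sum>i\<le>k. pmf A i * pmf B (k - i))"
proof -
  have "pmf (addp A B) k = measure_pmf.expectation A (\<lambda>a. pmf (map_pmf ((+) a) B) k)"
    by (simp add: addp_def pmf_bind)
  also have "\<dots> = (\<Sum>a\<in>{..k}. pmf (map_pmf ((+) a) B) k * pmf A a)"
    by (rule integral_measure_pmf_real) (auto simp: pmf_map_plus split: if_splits)
  also have "\<dots> = (\<Sum>i\<le>k. pmf A i * pmf B (k - i))"
    by (intro sum.cong) (auto simp: pmf_map_plus)
  finally show ?thesis .
qed

lemma expectation_nat_suminf:
  fixes X :: "nat pmf" and h :: "nat \<Rightarrow> real"
  assumes "\<And>x. \<bar>h x\<bar> \<le> B"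
  shows "measure_pmf.expectation X h = (\<Sum>n. pmf X n * h n)"
proof -
  have "measure_pmf.expectation X h = (\<integral>n. pmf X n * h n \<partial>count_space UNIV)"
    unfolding measure_pmf_eq_density by (subst integral_density) auto
  also have "\<dots> = (\<Sum>n. pmf X n * h n)"
  proof (rule integral_count_space_nat)
    have s: "summable (\<lambda>n. pmf X n)"
      using integrable_pmf[of UNIV X] unfolding integrable_count_space_nat_iff by simp
    have "summable (\<lambda>n. pmf X n * B)"
      by (rule summable_mult2[OF s])
    then have "summable (\<lambda>n. norm (pmf X n * h n))"
      by (rule summable_comparison_test'[where N=0])
         (use assms in \<open>auto simp: abs_mult intro!: mult_left_mono\<close>)
    then show "integrable (count_space UNIV) (\<lambda>n. pmf X n * h n)"
      unfolding integrable_count_space_nat_iff .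
  qed
  finally show ?thesis .
qed

lemma expectation_ge_sum:
  fixes h :: "'a \<Rightarrow> real"
  assumes "finite A" "\<And>x. 0 \<le> h x" "\<And>x. h x \<le> B"
  shows "(\<Sum>a\<in>A. pmf X a * h a) \<le> measure_pmf.expectation X h"
proof -
  have "(\<Sum>a\<in>A. pmf X a * h a) = measure_pmf.expectation X (\<lambda>x. indicator A x * h x)"
    by (subst integral_measure_pmf_real[where A=A]) (auto simp: assms mult.commute indicator_def)
  also have "\<dots> \<le> measure_pmf.expectation X h"
    by (rule integral_mono)
       (auto intro!: integrable_pmf_bounded[where B=B] simp: assms abs_le_iff split: split_indicator
             intro: order_trans[OF _ assms(3)] order_trans[OF assms(2)])
  finally show ?thesis .
qed

lemma expectation_le_split:
  fixes h :: "'a \<Rightarrow> real"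
  assumes "\<And>x. 0 \<le> h x" "\<And>x. h x \<le> B"
  shows "measure_pmf.expectation X h \<le> pmf X u * h u + (1 - pmf X u) * B"
proof -
  have i1: "integrable (measure_pmf X) h"
    by (rule integrable_pmf_bounded[where B=B]) (simp add: assms abs_of_nonneg)
  have i2: "integrable (measure_pmf X) (\<lambda>x. indicator {u} x * h u + (1 - indicator {u} x) * B)"
    by (rule integrable_pmf_bounded[where B="\<bar>B\<bar> + \<bar>h u\<bar>"]) (auto split: split_indicator)
  have "measure_pmf.expectation X h \<le> measure_pmf.expectation X (\<lambda>x. indicator {u} x * h u + (1 - indicator {u} x) * B)"
    by (rule integral_mono[OF i1 i2]) (auto simp: assms split: split_indicator)
  also have "(\<lambda>x. indicator {u} x * h u + (1 - indicator {u} x) * B) = (\<lambda>x. B + (h u - B) * indicator {u} x)"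
    by (auto simp: fun_eq_iff algebra_simps)
  also have "measure_pmf.expectation X \<dots> = B + (h u - B) * pmf X u"
  proof -
    have "integrable (measure_pmf X) (\<lambda>x. (h u - B) * indicator {u} x)"
      by (rule integrable_pmf_bounded[where B="\<bar>h u - B\<bar>"]) (auto simp: abs_mult split: split_indicator)
    then show ?thesis
      using Bochner_Integration.integral_add[of "measure_pmf X" "\<lambda>x. B" "\<lambda>x. (h u - B) * indicator {u} x"]
      by (simp add: measure_pmf_single)
  qed
  also have "\<dots> = pmf X u * h u + (1 - pmf X u) * B"
    by (simp add: algebra_simps)
  finally show ?thesis .
qed

lemma pmf_embed_from_sums:
  fixes f :: "nat \<Rightarrow> real"
  assumes "\<And>k. 0 \<le> f k" "f sums 1"
  shows "pmf (embed_pmf f) k = f k"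
proof (rule pmf_embed_pmf)
  show "\<And>x. 0 \<le> f x" by (rule assms(1))
  have "(\<integral>\<^sup>+ x. ennreal (f x) \<partial>count_space UNIV) = (\<Sum>x. ennreal (f x))"
    by (rule nn_integral_count_space_nat)
  also have "\<dots> = ennreal (suminf f)"
    by (rule suminf_ennreal2) (use assms in \<open>auto simp: sums_iff\<close>)
  also have "\<dots> = 1" using assms(2) by (simp add: sums_iff)
  finally show "(\<integral>\<^sup>+ x. ennreal (f x) \<partial>count_space UNIV) = 1" .
qed

lemma fps_pow_pmf:
  assumes "\<And>k. fps_nth q k = pmf Q k"
  shows "fps_nth (q ^ j) k = pmf (convpow j Q) k"
proof (induction j arbitrary: k)
  case 0
  then show ?case by (simp add: pmf_return)
next
  case (Suc j)
  have "fps_nth (q ^ Suc j) k = (\<Sum>i=0..k. fps_nth q i * fps_nth (q ^ j) (k - i))"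
    by (simp add: fps_mult_nth)
  also have "\<dots> = (\<Sum>i\<le>k. pmf Q i * pmf (convpow j Q) (k - i))"
    by (simp add: assms Suc atLeast0AtMost)
  also have "\<dots> = pmf (convpow (Suc j) Q) k"
    by (simp add: pmf_addp)
  finally show ?case .
qed

lemma fps_comp_gen_pmf:
  assumes "\<And>k. fps_nth p k = pmf P k" "\<And>k. fps_nth q k = pmf Q k"
  shows "fps_nth (fps_comp_gen p q) k = pmf (bind_pmf P (\<lambda>j. convpow j Q)) k"
proof -
  have "fps_nth (fps_comp_gen p q) k = (\<Sum>j. pmf P j * pmf (convpow j Q) k)"
    by (simp add: fps_comp_gen_def assms(1) fps_pow_pmf[OF assms(2)])
  also have "\<dots> = measure_pmf.expectation P (\<lambda>j. pmf (convpow j Q) k)"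
    by (rule expectation_nat_suminf[symmetric, where B=1]) (simp add: pmf_le_1)
  also have "\<dots> = pmf (bind_pmf P (\<lambda>j. convpow j Q)) k"
    by (simp add: pmf_bind)
  finally show ?thesis .
qed

lemma fps_iter_pmf_Suc:
  assumes "\<And>k. fps_nth p k = pmf P k"
  shows "fps_nth (fps_iter p (Suc m)) k = pmf (Zp P (Suc m)) k"
proof (induction m arbitrary: k)
  case 0
  then show ?case by (simp add: assms convpow_return1 bind_return_pmf')
next
  case (Suc m)
  have "fps_nth (fps_iter p (Suc (Suc m))) k = fps_nth (fps_comp_gen p (fps_iter p (Suc m))) k"
    by simp
  also have "\<dots> = pmf (bind_pmf P (\<lambda>j. convpow j (Zp P (Suc m)))) k"
    by (rule fps_comp_gen_pmf[OF assms Suc])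
  finally show ?case by simp
qed

lemma fps_iter_pmf:
  assumes "\<And>k. fps_nth p k = pmf P k"
  shows "fps_nth (fps_iter p n) k = pmf (Zp P n) k"
proof (cases n)
  case 0
  then show ?thesis by (simp add: pmf_return fps_X_def)
next
  case (Suc m)
  then show ?thesis using fps_iter_pmf_Suc[OF assms] by simp
qed

lemma expectation_le_split2:
  fixes h :: "'a \<Rightarrow> real"
  assumes "\<And>x. 0 \<le> h x" "\<And>x. h x \<le> C" "\<And>x. x \<noteq> u \<Longrightarrow> h x \<le> B"
  shows "measure_pmf.expectation X h \<le> pmf X u * h u + (1 - pmf X u) * B"
proof -
  have i1: "integrable (measure_pmf X) h"
    by (rule integrable_pmf_bounded[where B=C]) (simp add: assms abs_of_nonneg)
  have i2: "integrable (measure_pmf X) (\<lambda>x. indicator {u} x * h u + (1 - indicator {u} x) * B)"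
    by (rule integrable_pmf_bounded[where B="\<bar>B\<bar> + \<bar>h u\<bar>"]) (auto split: split_indicator)
  have "measure_pmf.expectation X h \<le> measure_pmf.expectation X (\<lambda>x. indicator {u} x * h u + (1 - indicator {u} x) * B)"
    by (rule integral_mono[OF i1 i2]) (auto simp: assms split: split_indicator)
  also have "(\<lambda>x. indicator {u} x * h u + (1 - indicator {u} x) * B) = (\<lambda>x. B + (h u - B) * indicator {u} x)"
    by (auto simp: fun_eq_iff algebra_simps)
  also have "measure_pmf.expectation X \<dots> = B + (h u - B) * pmf X u"
  proof -
    have "integrable (measure_pmf X) (\<lambda>x. (h u - B) * indicator {u} x)"
      by (rule integrable_pmf_bounded[where B="\<bar>h u - B\<bar>"]) (auto simp: abs_mult split: split_indicator)
    then show ?thesis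
      using Bochner_Integration.integral_add[of "measure_pmf X" "\<lambda>x. B" "\<lambda>x. (h u - B) * indicator {u} x"]
      by (simp add: measure_pmf_single)
  qed
  also have "\<dots> = pmf X u * h u + (1 - pmf X u) * B"
    by (simp add: algebra_simps)
  finally show ?thesis .
qed

lemma sum_pmf_le_1: "finite S \<Longrightarrow> sum (pmf C) S \<le> 1"
  by (metis measure_measure_pmf_finite measure_pmf.prob_le_1)

lemma pmf_convpow_0: "pmf (convpow j Q) 0 = (pmf Q 0) ^ j"
  by (induction j) (simp_all add: pmf_addp pmf_return)

lemma pmf_convpow_pos_0: "k \<ge> 1 \<Longrightarrow> pmf (convpow 0 Q) k = 0"
  by (simp add: pmf_return)

lemma q0_mono: "pmf (Zp P n) 0 \<le> pmf (Zp P (Suc n)) 0"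
proof -
  have "pmf (Zp P (Suc n)) 0 = measure_pmf.expectation (Zp P n) (\<lambda>i. pmf (convpow i P) 0)"
    by (simp only: Zp_inner stepp_def pmf_bind)
  moreover have "(\<Sum>a\<in>{0}. pmf (Zp P n) a * pmf (convpow a P) 0) \<le> measure_pmf.expectation (Zp P n) (\<lambda>i. pmf (convpow i P) 0)"
    by (rule expectation_ge_sum[where B=1]) (auto simp: pmf_le_1)
  ultimately show ?thesis by (simp add: pmf_return)
qed

lemma q0_less_1:
  assumes "pmf P 0 < 1"
  shows "pmf (Zp P n) 0 < 1"
proof (induction n)
  case 0
  then show ?case by (simp add: pmf_return)
next
  case (Suc n)
  define q where "q = pmf (Zp P n) 0"
  have q: "0 \<le> q" "q < 1" using Suc by (auto simp: q_def)
  have "pmf (Zp P (Suc n)) 0 = measure_pmf.expectation P (\<lambda>j. q ^ j)"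
    by (simp add: pmf_bind pmf_convpow_0 q_def)
  also have "\<dots> \<le> pmf P 0 * q ^ 0 + (1 - pmf P 0) * q"
  proof (rule expectation_le_split2[where C=1])
    fix x :: nat assume "x \<noteq> 0"
    then show "q ^ x \<le> q" using q power_decreasing[of 1 x q] by simp
  qed (use q in \<open>auto simp: power_le_one\<close>)
  also have "\<dots> < 1"
  proof -
    have "(1 - pmf P 0) * q < (1 - pmf P 0) * 1"
      using q assms by (intro mult_strict_left_mono) auto
    then show ?thesis by simp
  qed
  finally show ?case .
qed

lemma convpow_pos_bound:
  assumes "k \<ge> 1" "\<And>x. x \<ge> 1 \<Longrightarrow> pmf Q x \<le> b"
  shows "pmf (convpow j Q) k \<le> b * (\<Sum>i<j. (pmf Q 0) ^ i)"
  using assms(1)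
proof (induction j arbitrary: k)
  case 0
  then show ?case by (simp add: pmf_return)
next
  case (Suc j)
  define C where "C = convpow j Q"
  have b0: "0 \<le> b" using assms(2)[of 1] pmf_nonneg[of Q 1] by linarith
  have "pmf (convpow (Suc j) Q) k = (\<Sum>i\<le>k. pmf Q i * pmf C (k - i))"
    by (simp add: pmf_addp C_def)
  also have "\<dots> = pmf Q 0 * pmf C k + (\<Sum>i\<in>{1..k}. pmf Q i * pmf C (k - i))"
  proof -
    have "{..k} = insert 0 {1..k}" by auto
    then show ?thesis by simp
  qed
  also have "(\<Sum>i\<in>{1..k}. pmf Q i * pmf C (k - i)) \<le> (\<Sum>i\<in>{1..k}. b * pmf C (k - i))"
    by (intro sum_mono mult_right_mono assms(2)) auto
  also have "\<dots> = b * sum (pmf C) ((\<lambda>i. k - i) ` {1..k})"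
    by (subst sum.reindex) (auto simp: inj_on_def sum_distrib_left)
  also have "\<dots> \<le> b * 1"
    by (intro mult_left_mono sum_pmf_le_1 b0) auto
  also have "pmf Q 0 * pmf C k \<le> pmf Q 0 * (b * (\<Sum>i<j. (pmf Q 0) ^ i))"
    using Suc by (intro mult_left_mono) (auto simp: C_def)
  finally have "pmf (convpow (Suc j) Q) k \<le> b * (1 + pmf Q 0 * (\<Sum>i<j. (pmf Q 0) ^ i))"
    by (simp add: algebra_simps)
  also have "1 + pmf Q 0 * (\<Sum>i<j. (pmf Q 0) ^ i) = (\<Sum>i<Suc j. (pmf Q 0) ^ i)"
    by (subst sum.lessThan_Suc_shift) (simp add: sum_distrib_left)
  finally show ?case .
qed

definition bZ :: "nat pmf \<Rightarrow> nat \<Rightarrow> real" where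
  "bZ P n = (SUP k\<in>{1..}. pmf (Zp P n) k)"

lemma bdd_pmf: "bdd_above ((\<lambda>k. pmf X k) ` S)"
  by (rule bdd_aboveI[where M=1]) (auto simp: pmf_le_1)

lemma pmf_le_bZ: "k \<ge> 1 \<Longrightarrow> pmf (Zp P n) k \<le> bZ P n"
  unfolding bZ_def by (rule cSUP_upper) (auto simp: bdd_pmf)

lemma bZ_nonneg: "0 \<le> bZ P n"
  using pmf_le_bZ[of 1 P n] pmf_nonneg[of "Zp P n" 1] by linarith

lemma bZ_mono:
  assumes "pmf P 0 < 1"
  shows "bZ P (Suc n) \<le> bZ P n"
proof -
  define Q where "Q = Zp P n"
  define q where "q = pmf Q 0"
  define b where "b = bZ P n"
  have q: "0 \<le> q" "q < 1" using q0_less_1[OF assms] by (auto simp: q_def Q_def)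
  have b: "0 \<le> b" by (simp add: b_def bZ_nonneg)
  have q': "q \<le> pmf (Zp P (Suc n)) 0" using q0_mono[of P n] by (simp add: q_def Q_def)
  have E0: "measure_pmf.expectation P (\<lambda>j. q ^ j) = pmf (Zp P (Suc n)) 0"
    by (simp add: pmf_bind pmf_convpow_0 q_def Q_def)
  show ?thesis
    unfolding bZ_def[of P "Suc n"]
  proof (rule cSUP_least)
    fix k :: nat assume k: "k \<in> {1..}"
    have "pmf (Zp P (Suc n)) k = measure_pmf.expectation P (\<lambda>j. pmf (convpow j Q) k)"
      by (simp add: pmf_bind Q_def)
    also have "\<dots> \<le> measure_pmf.expectation P (\<lambda>j. b / (1 - q) * (1 - q ^ j))"
    proof (rule integral_mono)
      show "integrable (measure_pmf P) (\<lambda>j. pmf (convpow j Q) k)"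
        by (rule integrable_pmf_bounded[where B=1]) (simp add: pmf_le_1)
      show "integrable (measure_pmf P) (\<lambda>j. b / (1 - q) * (1 - q ^ j))"
      proof (rule integrable_pmf_bounded[where B="b / (1 - q)"])
        fix j :: nat
        have h: "0 \<le> q ^ j" "q ^ j \<le> 1" using q by (auto simp: power_le_one)
        have "0 \<le> b / (1 - q)" using q b by auto
        moreover have "b / (1 - q) * (1 - q ^ j) \<le> b / (1 - q) * 1"
          using h \<open>0 \<le> b / (1 - q)\<close> by (intro mult_left_mono) auto
        ultimately show "\<bar>b / (1 - q) * (1 - q ^ j)\<bar> \<le> b / (1 - q)"
          using h b q by (subst abs_of_nonneg) auto
      qed
      fix j
      have "pmf (convpow j Q) k \<le> b * (\<Sum>i<j. q ^ i)"
        unfolding q_def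
        by (rule convpow_pos_bound) (use k in \<open>auto simp: b_def Q_def pmf_le_bZ\<close>)
      also have "\<dots> = b / (1 - q) * (1 - q ^ j)"
        using q by (simp add: one_diff_power_eq[symmetric] field_simps)
      finally show "pmf (convpow j Q) k \<le> b / (1 - q) * (1 - q ^ j)" .
    qed
    also have "\<dots> = b / (1 - q) * (1 - pmf (Zp P (Suc n)) 0)"
    proof -
      have "integrable (measure_pmf P) (\<lambda>j. q ^ j)"
        by (rule integrable_pmf_bounded[where B=1]) (use q in \<open>auto simp: power_le_one\<close>)
      then have "measure_pmf.expectation P (\<lambda>j. b / (1 - q) * (1 - q ^ j)) = b / (1 - q) * (1 - measure_pmf.expectation P (\<lambda>j. q ^ j))"
        by (simp add: Bochner_Integration.integral_diff)
      then show ?thesis by (simp only: E0)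
    qed
    also have "\<dots> \<le> b / (1 - q) * (1 - q)"
      using q q' b by (intro mult_left_mono) auto
    also have "\<dots> = b" using q by simp
    finally show "pmf (Zp P (Suc n)) k \<le> bZ P n" by (simp add: b_def)
  qed auto
qed

definition gP :: "nat pmf \<Rightarrow> nat \<Rightarrow> real" where
  "gP P j = (SUP k. pmf (convpow j P) k)"

lemma pmf_le_gP: "pmf (convpow j P) k \<le> gP P j"
  unfolding gP_def by (rule cSUP_upper) (auto simp: bdd_pmf)

lemma gP_nonneg: "0 \<le> gP P j"
  using pmf_le_gP[of j P 0] pmf_nonneg[of "convpow j P" 0] by linarith

lemma gP_le_1: "gP P j \<le> 1"
  unfolding gP_def by (rule cSUP_least) (auto simp: pmf_le_1)

lemma gP_Suc: "gP P (Suc j) \<le> gP P j"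
  unfolding gP_def[of P "Suc j"]
proof (rule cSUP_least)
  fix k
  have "pmf (convpow (Suc j) P) k = (\<Sum>i\<le>k. pmf P i * pmf (convpow j P) (k - i))"
    by (simp add: pmf_addp)
  also have "\<dots> \<le> (\<Sum>i\<le>k. pmf P i * gP P j)"
    by (intro sum_mono mult_left_mono pmf_le_gP) auto
  also have "\<dots> = sum (pmf P) {..k} * gP P j"
    by (simp add: sum_distrib_right)
  also have "\<dots> \<le> 1 * gP P j"
    by (intro mult_right_mono sum_pmf_le_1 gP_nonneg) auto
  finally show "pmf (convpow (Suc j) P) k \<le> gP P j" by simp
qed auto

lemma gP_antimono: "i \<le> j \<Longrightarrow> gP P j \<le> gP P i"
proof (induction j rule: dec_induct)
  case (step n)
  then show ?case using gP_Suc[of P n] by linarith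
qed simp

lemma gP_key:
  "pmf (convpow (Suc j) P) k \<le> pmf P w * (if w \<le> k then pmf (convpow j P) (k - w) else 0) + (1 - pmf P w) * gP P j"
proof -
  have "pmf (convpow (Suc j) P) k = measure_pmf.expectation P (\<lambda>x. pmf (map_pmf ((+) x) (convpow j P)) k)"
    by (simp add: addp_def pmf_bind)
  also have "\<dots> \<le> pmf P w * pmf (map_pmf ((+) w) (convpow j P)) k + (1 - pmf P w) * gP P j"
    by (rule expectation_le_split2[where C=1]) (auto simp: pmf_map_plus pmf_le_1 pmf_le_gP gP_nonneg)
  finally show ?thesis by (simp add: pmf_map_plus)
qed

lemma shift_inj:
  fixes a1 a2 m u v :: nat
  assumes "a1 \<le> m" "a2 \<le> m" "u < v" "a1 * u + (m - a1) * v = a2 * u + (m - a2) * v"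
  shows "a1 = a2"
proof (rule ccontr)
  assume ne: "a1 \<noteq> a2"
  have *: False if lt: "x1 < x2" "x2 \<le> m" "x1 * u + (m - x1) * v = x2 * u + (m - x2) * v" for x1 x2
  proof -
    obtain d where d: "x2 = x1 + d" "0 < d" using less_imp_add_positive[OF lt(1)] by auto
    define r where "r = m - x2"
    have mx: "m - x1 = r + d" using d lt by (simp add: r_def)
    have "x1 * u + (r + d) * v = (x1 + d) * u + r * v" using lt(3) mx d(1) r_def by simp
    then have "(x1 * u + r * v) + d * v = (x1 * u + r * v) + d * u" by (simp add: algebra_simps)
    then have "d * v = d * u" by (rule add_left_imp_eq)
    with d assms(3) show False by simp
  qed
  show False
  proof (cases "a1 < a2")
    case True
    then show False using * [of a1 a2] assms by blast
  next
    case False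
    then have "a2 < a1" using ne by simp
    then show False using * [of a2 a1] assms by simp
  qed
qed

lemma gP_tendsto:
  fixes u v :: nat
  assumes uv: "u < v" and pu: "0 < pmf P u" and pv: "0 < pmf P v"
  shows "gP P \<longlonglongrightarrow> 0"
proof -
  let ?g = "gP P"
  let ?F = "\<lambda>j k. pmf (convpow j P) k"
  define c where "c = (INF j. ?g j)"
  have bdd: "bdd_below (range ?g)"
    by (rule bdd_belowI[where m=0]) (auto simp: gP_nonneg)
  have gc: "\<And>j. c \<le> ?g j"
    unfolding c_def by (rule cINF_lower[OF bdd]) simp
  have c0: "0 \<le> c"
    unfolding c_def by (rule cINF_greatest) (auto simp: gP_nonneg)
  have "c = 0"
  proof (rule ccontr)
    assume "c \<noteq> 0"
    with c0 have cpos: "0 < c" by simp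
    define e where "e = min (pmf P u) (pmf P v)"
    have e: "0 < e" "e \<le> 1" "e \<le> pmf P u" "e \<le> pmf P v"
      using pu pv pmf_le_1[of P u] by (auto simp: e_def)
    obtain m :: nat where m: "2 / c < real m"
      using reals_Archimedean2 by blast
    have m2: "1 < real (Suc m) * (c / 2)"
    proof -
      have "2 < real m * c" using m cpos by (simp add: field_simps)
      then show ?thesis using cpos by (simp add: algebra_simps)
    qed
    define \<delta> where "\<delta> = c * e ^ (m + 1) / 8"
    have \<delta>: "0 < \<delta>" using cpos e by (simp add: \<delta>_def)
    have \<delta>m: "2 * \<delta> / e ^ m = c * e / 4"
      using e by (simp add: \<delta>_def field_simps)
    obtain j where j: "?g j < c + \<delta>"
    proof -
      have "(INF j. ?g j) < c + \<delta>" using \<delta> by (simp add: c_def)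
      then show ?thesis using that by (subst (asm) cINF_less_iff[OF _ bdd]) auto
    qed
    define M where "M = ?g j"
    have M: "c \<le> M" "M < c + \<delta>" using gc j by (auto simp: M_def)
    obtain k where k: "?g (j + m) - \<delta> < ?F (j + m) k"
    proof -
      have "?g (j + m) - \<delta> < (SUP k. ?F (j + m) k)" using \<delta> by (simp add: gP_def)
      then show ?thesis using that by (subst (asm) less_cSUP_iff) (auto simp: bdd_pmf)
    qed
    have Fk: "M - 2 * \<delta> \<le> ?F (j + m) k"
      using k gc[of "j + m"] M by linarith
    have claim: "\<forall>a b. a + b = t \<longrightarrow> a * u + b * v \<le> k \<and>
                   M - 2 * \<delta> / e ^ t \<le> ?F (j + m - t) (k - (a * u + b * v))" if "t \<le> m" for t
      using that
    proof (induction t)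
      case 0
      then show ?case using Fk by simp
    next
      case (Suc t)
      have IH: "\<forall>a b. a + b = t \<longrightarrow> a * u + b * v \<le> k \<and>
                   M - 2 * \<delta> / e ^ t \<le> ?F (j + m - t) (k - (a * u + b * v))"
        using Suc by simp
      define D where "D = 2 * \<delta> / e ^ t"
      have D0: "0 \<le> D" using \<delta> e by (simp add: D_def)
      have Dle: "D \<le> c * e / 4"
      proof -
        have "e ^ m \<le> e ^ t" using Suc.prems e by (intro power_decreasing) auto
        then have "2 * \<delta> / e ^ t \<le> 2 * \<delta> / e ^ m"
          using e \<delta> by (intro divide_left_mono) auto
        then show ?thesis using \<delta>m by (simp add: D_def)
      qed
      define i where "i = j + m - Suc t"
      have ji: "j \<le> i" using Suc.prems by (simp add: i_def)
      have iS: "j + m - t = Suc i" using Suc.prems by (simp add: i_def)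
      have gi: "?g i \<le> M" unfolding M_def by (rule gP_antimono[OF ji])
      show ?case
      proof (intro allI impI)
        fix a b assume ab: "a + b = Suc t"
        obtain a' b' w where a'b': "a' + b' = t" and w: "w = u \<or> w = v"
          and sh: "a * u + b * v = (a' * u + b' * v) + w"
        proof (cases a)
          case 0
          then have "b = Suc t" using ab by simp
          then show ?thesis using that[of 0 t v] 0 by (simp add: algebra_simps)
        next
          case (Suc a0)
          then have "a0 + b = t" using ab by simp
          then show ?thesis using that[of a0 b u] Suc by (simp add: algebra_simps)
        qed
        define s' where "s' = a' * u + b' * v"
        have IH1: "s' \<le> k" "M - D \<le> ?F (Suc i) (k - s')"
          using IH a'b' iS by (auto simp: s'_def D_def)
        have pw: "e \<le> pmf P w" "pmf P w \<le> 1" using w e by (auto simp: pmf_le_1)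
        define X where "X = (if w \<le> k - s' then ?F i (k - s' - w) else 0)"
        have "?F (Suc i) (k - s') \<le> pmf P w * X + (1 - pmf P w) * ?g i"
          unfolding X_def by (rule gP_key)
        also have "\<dots> \<le> pmf P w * X + (1 - pmf P w) * M"
          using gi pw by (intro add_left_mono mult_left_mono) auto
        finally have ineq: "pmf P w * M - D \<le> pmf P w * X"
          using IH1 by (simp add: algebra_simps)
        have wk: "w \<le> k - s'"
        proof (rule ccontr)
          assume "\<not> w \<le> k - s'"
          then have "X = 0" by (simp add: X_def)
          with ineq have "pmf P w * M \<le> D" by simp
          moreover have "e * c \<le> pmf P w * M"
            using pw M e cpos by (intro mult_mono) auto
          moreover have "c * e / 4 < e * c" using cpos e by simp
          ultimately show False using Dle by linarith
        qed
        then have Xeq: "X = ?F i (k - (a * u + b * v))"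
          by (simp add: X_def sh s'_def[symmetric] diff_diff_add)
        have "M - D / e \<le> M - D / pmf P w"
          using pw e D0 by (simp add: frac_le)
        also have "M - D / pmf P w \<le> X"
        proof -
          have "0 < pmf P w" using pw e by linarith
          with ineq show ?thesis by (simp add: field_simps)
        qed
        finally have "M - D / e \<le> ?F i (k - (a * u + b * v))" using Xeq by simp
        moreover have "D / e = 2 * \<delta> / e ^ Suc t" by (simp add: D_def)
        moreover have "j + m - Suc t = i" by (simp add: i_def)
        ultimately show "a * u + b * v \<le> k \<and> M - 2 * \<delta> / e ^ Suc t \<le> ?F (j + m - Suc t) (k - (a * u + b * v))"
          using wk IH1 sh s'_def by auto
      qed
    qed
    from claim[of m] have cl: "\<And>a. a \<le> m \<Longrightarrow> a * u + (m - a) * v \<le> k \<and> M - 2 * \<delta> / e ^ m \<le> ?F j (k - (a * u + (m - a) * v))"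
      by auto
    define S where "S = (\<lambda>a. k - (a * u + (m - a) * v)) ` {..m}"
    have inj: "inj_on (\<lambda>a. k - (a * u + (m - a) * v)) {..m}"
    proof (rule inj_onI)
      fix a1 a2 assume a: "a1 \<in> {..m}" "a2 \<in> {..m}" "k - (a1 * u + (m - a1) * v) = k - (a2 * u + (m - a2) * v)"
      have le: "a1 * u + (m - a1) * v \<le> k" "a2 * u + (m - a2) * v \<le> k"
        using a cl[of a1] cl[of a2] by auto
      have "a1 * u + (m - a1) * v = a2 * u + (m - a2) * v"
        using a(3) le by (metis diff_diff_cancel)
      then show "a1 = a2" using shift_inj[of a1 m a2 u v] a uv by simp
    qed
    have cardS: "card S = Suc m" using inj by (simp add: S_def card_image)
    have lower: "c / 2 \<le> ?F j x" if "x \<in> S" for x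
    proof -
      obtain a where a: "a \<le> m" "x = k - (a * u + (m - a) * v)" using \<open>x \<in> S\<close> by (auto simp: S_def)
      have "M - 2 * \<delta> / e ^ m \<le> ?F j x" using cl[OF a(1)] a(2) by simp
      moreover have "c * e / 4 \<le> c / 4" using cpos e by (simp add: field_simps)
      ultimately show ?thesis using \<delta>m M cpos by linarith
    qed
    have "real (card S) * (c / 2) \<le> sum (?F j) S"
      by (rule sum_bounded_below) (rule lower)
    also have "\<dots> \<le> 1" by (rule sum_pmf_le_1) (simp add: S_def)
    finally show False using m2 cardS by simp
  qed
  show ?thesis
  proof (rule LIMSEQ_I)
    fix r :: real assume r: "0 < r"
    have "(INF j. ?g j) < r" using r \<open>c = 0\<close> by (simp add: c_def)
    then obtain j0 where j0: "?g j0 < r" by (subst (asm) cINF_less_iff[OF _ bdd]) auto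
    have "\<forall>n\<ge>j0. norm (?g n - 0) < r"
    proof (intro allI impI)
      fix n assume "j0 \<le> n"
      then have "?g n \<le> ?g j0" by (rule gP_antimono)
      then show "norm (?g n - 0) < r" using j0 gP_nonneg[of P n] by simp
    qed
    then show "\<exists>no. \<forall>n\<ge>no. norm (?g n - 0) < r" by blast
  qed
qed

lemma contract_to_0:
  fixes x e :: "nat \<Rightarrow> real"
  assumes step: "\<And>n. x (Suc n) \<le> e n + l * x n" and x0: "\<And>n. 0 \<le> x n" and x1: "\<And>n. x n \<le> 1"
    and l: "0 \<le> l" "l < 1" and e: "e \<longlonglongrightarrow> 0"
  shows "x \<longlonglongrightarrow> 0"
proof (rule LIMSEQ_I)
  fix r :: real assume r: "0 < r"
  have "0 < r * (1 - l) / 2" using r l by simp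
  then obtain N where N: "\<And>n. n \<ge> N \<Longrightarrow> norm (e n - 0) < r * (1 - l) / 2"
    using LIMSEQ_D[OF e] by blast
  have bound: "x (N + t) \<le> l ^ t + r / 2" for t
  proof (induction t)
    case 0
    then show ?case using x1[of N] r by simp
  next
    case (Suc t)
    have "x (N + Suc t) \<le> e (N + t) + l * x (N + t)" using step[of "N + t"] by simp
    also have "\<dots> \<le> r * (1 - l) / 2 + l * (l ^ t + r / 2)"
      using N[of "N + t"] Suc l by (intro add_mono mult_left_mono) auto
    also have "\<dots> = l ^ Suc t + r / 2" by (simp add: field_simps)
    finally show ?case .
  qed
  have "(\<lambda>t. l ^ t) \<longlonglongrightarrow> 0" using l by (intro LIMSEQ_power_zero) auto
  then obtain T where T: "\<And>t. t \<ge> T \<Longrightarrow> norm (l ^ t - 0) < r / 2"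
    using LIMSEQ_D[of "\<lambda>t. l ^ t" 0 "r / 2"] r by auto
  have "\<forall>n\<ge>N + T. norm (x n - 0) < r"
  proof (intro allI impI)
    fix n assume n: "N + T \<le> n"
    then have "x n \<le> l ^ (n - N) + r / 2" using bound[of "n - N"] by simp
    moreover have "l ^ (n - N) < r / 2" using T[of "n - N"] n l by simp
    ultimately show "norm (x n - 0) < r" using x0[of n] by simp
  qed
  then show "\<exists>no. \<forall>n\<ge>no. norm (x n - 0) < r" by blast
qed

lemma pmf_convpow_below:
  assumes "pmf P 0 = 0"
  shows "k < i \<Longrightarrow> pmf (convpow i P) k = 0"
proof (induction i arbitrary: k)
  case 0
  then show ?case by simp
next
  case (Suc i)
  have "pmf (convpow (Suc i) P) k = (\<Sum>x\<le>k. pmf P x * pmf (convpow i P) (k - x))"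
    by (simp add: pmf_addp)
  also have "\<dots> = 0"
  proof (rule sum.neutral, intro ballI)
    fix x assume "x \<in> {..k}"
    show "pmf P x * pmf (convpow i P) (k - x) = 0"
    proof (cases x)
      case 0 then show ?thesis using assms by simp
    next
      case (Suc x') then show ?thesis using Suc.IH[of "k - x"] Suc.prems \<open>x \<in> {..k}\<close> by simp
    qed
  qed
  finally show ?case .
qed

lemma pmf_convpow_diag:
  assumes "pmf P 0 = 0"
  shows "pmf (convpow (Suc i) P) (Suc i) \<le> pmf P 1"
proof -
  define f where "f = (\<lambda>x. pmf P x * pmf (convpow i P) (Suc i - x))"
  have "pmf (convpow (Suc i) P) (Suc i) = (\<Sum>x\<le>Suc i. f x)"
    by (simp add: pmf_addp f_def)
  also have "\<dots> = f 1 + (\<Sum>x\<in>{..Suc i} - {1}. f x)"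
    by (subst sum.remove[of _ 1]) auto
  also have "(\<Sum>x\<in>{..Suc i} - {1}. f x) = 0"
  proof (rule sum.neutral, intro ballI)
    fix x assume x: "x \<in> {..Suc i} - {1}"
    show "f x = 0"
    proof (cases "x = 0")
      case True then show ?thesis using assms by (simp add: f_def)
    next
      case False
      with x have "Suc i - x < i" by auto
      then show ?thesis by (simp add: f_def pmf_convpow_below[OF assms])
    qed
  qed
  also have "f 1 \<le> pmf P 1 * 1"
    unfolding f_def by (intro mult_left_mono pmf_le_1) auto
  finally show ?thesis by simp
qed

lemma q0_zero:
  assumes "pmf P 0 = 0"
  shows "pmf (Zp P n) 0 = 0"
proof (induction n)
  case 0
  then show ?case by (simp add: pmf_return)
next
  case (Suc n)
  have "pmf (Zp P (Suc n)) 0 = measure_pmf.expectation P (\<lambda>j. (0::real) ^ j)"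
    by (simp add: pmf_bind pmf_convpow_0 Suc)
  also have "\<dots> = (\<Sum>a\<in>{0}. 0 ^ a * pmf P a)"
    by (rule integral_measure_pmf_real) auto
  finally show ?case using assms by simp
qed

lemma B0_step:
  assumes "pmf P 0 = 0" "1 \<le> j"
  shows "pmf (Zp P (Suc n)) j \<le> (\<Sum>i<j. pmf (Zp P n) i) + pmf P 1 * pmf (Zp P n) j"
proof -
  define h where "h = (\<lambda>i. pmf (convpow i P) j)"
  have "pmf (Zp P (Suc n)) j = measure_pmf.expectation (Zp P n) h"
    by (simp only: Zp_inner stepp_def pmf_bind h_def)
  also have "\<dots> = (\<Sum>i\<in>{..j}. h i * pmf (Zp P n) i)"
  proof (rule integral_measure_pmf_real)
    fix i assume "h i \<noteq> 0"
    then show "i \<in> {..j}" using pmf_convpow_below[OF assms(1), of j i] by (cases "j < i") (auto simp: h_def)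
  qed simp
  also have "\<dots> = (\<Sum>i<j. h i * pmf (Zp P n) i) + h j * pmf (Zp P n) j"
    by (simp add: lessThan_Suc_atMost[symmetric])
  also have "\<dots> \<le> (\<Sum>i<j. pmf (Zp P n) i) + pmf P 1 * pmf (Zp P n) j"
  proof (intro add_mono sum_mono mult_right_mono)
    show "h i * pmf (Zp P n) i \<le> pmf (Zp P n) i" for i
      using pmf_le_1[of "convpow i P" j] by (simp add: h_def mult_left_le_one_le)
    obtain j' where "j = Suc j'" using assms(2) by (cases j) auto
    then show "h j \<le> pmf P 1" using pmf_convpow_diag[OF assms(1)] by (simp add: h_def)
  qed auto
  finally show ?thesis .
qed

lemma B0:
  assumes "pmf P 0 = 0" "pmf P 1 < 1"
  shows "1 \<le> j \<Longrightarrow> (\<lambda>n. pmf (Zp P n) j) \<longlonglongrightarrow> 0"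
proof (induction j rule: less_induct)
  case (less j)
  have e: "(\<lambda>n. \<Sum>i<j. pmf (Zp P n) i) \<longlonglongrightarrow> 0"
  proof (rule tendsto_null_sum)
    fix i assume "i \<in> {..<j}"
    then show "(\<lambda>n. pmf (Zp P n) i) \<longlonglongrightarrow> 0"
    proof (cases "i = 0")
      case True then show ?thesis by (simp add: q0_zero[OF assms(1)])
    next
      case False then show ?thesis using less.IH \<open>i \<in> {..<j}\<close> by auto
    qed
  qed
  show ?case
    by (rule contract_to_0[OF B0_step[OF assms(1) less.prems] _ _ _ assms(2) e])
       (auto simp: pmf_le_1)
qed

lemma B1:
  assumes "0 < pmf P 0" "1 \<le> j"
  shows "(\<lambda>n. pmf (Zp P n) j) \<longlonglongrightarrow> 0"
proof -
  let ?q = "\<lambda>n. pmf (Zp P n) 0"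
  have step: "?q n + pmf (Zp P n) j * (pmf P 0) ^ j \<le> ?q (Suc n)" for n
  proof -
    have "(\<Sum>a\<in>{0, j}. pmf (Zp P n) a * pmf (convpow a P) 0) \<le> measure_pmf.expectation (Zp P n) (\<lambda>i. pmf (convpow i P) 0)"
      by (rule expectation_ge_sum[where B=1]) (auto simp: pmf_le_1)
    also have "\<dots> = ?q (Suc n)"
      by (simp only: Zp_inner stepp_def pmf_bind)
    finally show ?thesis using assms(2) by (simp add: pmf_convpow_0)
  qed
  have inc: "incseq ?q" by (rule incseq_SucI) (rule q0_mono)
  have "?q \<longlonglongrightarrow> (SUP n. ?q n)"
    by (rule LIMSEQ_incseq_SUP[OF _ inc]) (rule bdd_aboveI[where M=1], auto simp: pmf_le_1)
  moreover from this have "(\<lambda>n. ?q (Suc n)) \<longlonglongrightarrow> (SUP n. ?q n)"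
    by (rule LIMSEQ_Suc)
  ultimately have d: "(\<lambda>n. (?q (Suc n) - ?q n) / (pmf P 0) ^ j) \<longlonglongrightarrow> ((SUP n. ?q n) - (SUP n. ?q n)) / (pmf P 0) ^ j"
    using assms(1) by (intro tendsto_divide tendsto_diff) auto
  show ?thesis
  proof (rule tendsto_sandwich[where f="\<lambda>_. 0" and h="\<lambda>n. (?q (Suc n) - ?q n) / (pmf P 0) ^ j"])
    show "\<forall>\<^sub>F n in sequentially. 0 \<le> pmf (Zp P n) j" by simp
    show "\<forall>\<^sub>F n in sequentially. pmf (Zp P n) j \<le> (?q (Suc n) - ?q n) / (pmf P 0) ^ j"
    proof (rule always_eventually, intro allI)
      fix n
      have "0 < (pmf P 0) ^ j" using assms by simp
      then show "pmf (Zp P n) j \<le> (?q (Suc n) - ?q n) / (pmf P 0) ^ j"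
        using step[of n] by (simp add: field_simps)
    qed
    show "(\<lambda>n. (?q (Suc n) - ?q n) / (pmf P 0) ^ j) \<longlonglongrightarrow> 0" using d by simp
  qed simp
qed

lemma B:
  assumes "pmf P 1 < 1" "1 \<le> j"
  shows "(\<lambda>n. pmf (Zp P n) j) \<longlonglongrightarrow> 0"
proof (cases "pmf P 0 = 0")
  case True show ?thesis by (rule B0[OF True assms(1) assms(2)])
next
  case False
  then have "0 < pmf P 0" using pmf_nonneg[of P 0] by linarith
  then show ?thesis using B1 assms(2) by blast
qed

lemma bZ_step:
  "bZ P (Suc n) \<le> (\<Sum>i\<in>{1..J}. pmf (Zp P n) i) + gP P (Suc J)"
  unfolding bZ_def[of P "Suc n"]
proof (rule cSUP_least)
  fix k :: nat assume k: "k \<in> {1..}"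
  define h where "h = (\<lambda>i. pmf (convpow i P) k)"
  have hb: "h i \<le> indicator {1..J} i + gP P (Suc J)" for i
  proof (cases "i = 0")
    case True then show ?thesis using k gP_nonneg[of P "Suc J"] by (simp add: h_def pmf_return)
  next
    case False
    show ?thesis
    proof (cases "i \<le> J")
      case True
      then show ?thesis using False gP_nonneg[of P "Suc J"] pmf_le_1[of "convpow i P" k]
        by (simp add: h_def)
    next
      case F2: False
      then have "gP P i \<le> gP P (Suc J)" by (intro gP_antimono) simp
      then show ?thesis using F2 pmf_le_gP[of i P k] by (simp add: h_def)
    qed
  qed
  have "pmf (Zp P (Suc n)) k = measure_pmf.expectation (Zp P n) h"
    by (simp only: Zp_inner stepp_def pmf_bind h_def)
  also have "\<dots> \<le> measure_pmf.expectation (Zp P n) (\<lambda>i. indicator {1..J} i + gP P (Suc J))"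
  proof (rule integral_mono)
    show "integrable (measure_pmf (Zp P n)) h"
      by (rule integrable_pmf_bounded[where B=1]) (simp add: h_def pmf_le_1)
    show "integrable (measure_pmf (Zp P n)) (\<lambda>i. indicator {1..J} i + gP P (Suc J))"
      by (rule integrable_pmf_bounded[where B="1 + gP P (Suc J)"])
         (auto simp: gP_nonneg split: split_indicator)
  qed (rule hb)
  also have "\<dots> = (\<Sum>i\<in>{1..J}. pmf (Zp P n) i) + gP P (Suc J)"
  proof -
    have "integrable (measure_pmf (Zp P n)) (\<lambda>i. indicator {1..J} i :: real)"
      by (rule integrable_pmf_bounded[where B=1]) (auto split: split_indicator)
    then show ?thesis
      using Bochner_Integration.integral_add[of "measure_pmf (Zp P n)" "\<lambda>i. indicator {1..J} i :: real" "\<lambda>i. gP P (Suc J)"]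
      by (simp add: measure_measure_pmf_finite)
  qed
  finally show "pmf (Zp P (Suc n)) k \<le> (\<Sum>i\<in>{1..J}. pmf (Zp P n) i) + gP P (Suc J)" .
qed auto

lemma bZ_tendsto:
  fixes u v :: nat
  assumes uv: "u < v" "0 < pmf P u" "0 < pmf P v" and p1: "pmf P 1 < 1"
  shows "bZ P \<longlonglongrightarrow> 0"
proof (rule LIMSEQ_I)
  fix r :: real assume r: "0 < r"
  obtain J where J: "\<And>n. n \<ge> J \<Longrightarrow> norm (gP P n - 0) < r / 2"
    using LIMSEQ_D[OF gP_tendsto[OF uv], of "r / 2"] r by auto
  have gJ: "gP P (Suc J) < r / 2" using J[of "Suc J"] gP_nonneg[of P "Suc J"] by simp
  have "(\<lambda>n. \<Sum>i\<in>{1..J}. pmf (Zp P n) i) \<longlonglongrightarrow> 0"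
    by (rule tendsto_null_sum) (use B[OF p1] in auto)
  moreover have "0 < r / 2" using r by simp
  ultimately obtain N where N: "\<And>n. n \<ge> N \<Longrightarrow> norm ((\<Sum>i\<in>{1..J}. pmf (Zp P n) i) - 0) < r / 2"
    using LIMSEQ_D by blast
  have "\<forall>n\<ge>Suc N. norm (bZ P n - 0) < r"
  proof (intro allI impI)
    fix n assume n: "Suc N \<le> n"
    then obtain n' where n': "n = Suc n'" "N \<le> n'" by (cases n) auto
    have "bZ P n \<le> (\<Sum>i\<in>{1..J}. pmf (Zp P n') i) + gP P (Suc J)"
      using bZ_step n'(1) by simp
    moreover have "(\<Sum>i\<in>{1..J}. pmf (Zp P n') i) < r / 2"
      using N[OF n'(2)] by simp
    ultimately show "norm (bZ P n - 0) < r" using gJ bZ_nonneg[of P n] by simp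
  qed
  then show "\<exists>no. \<forall>n\<ge>no. norm (bZ P n - 0) < r" by blast
qed

theorem theorem3:
  fixes p :: "real fps"
  assumes coeff_bounds: "\<forall>k. 0 \<le> fps_nth p k \<and> fps_nth p k < 1"
    and coeff_sum: "(\<lambda>k. fps_nth p k) sums 1"
  shows "(\<forall>n\<ge>1. fps_nth (fps_iter p n) 0 \<le> fps_nth (fps_iter p (Suc n)) 0)
       \<and> (\<forall>n\<ge>1. sup_coeff (fps_iter p (Suc n)) \<le> sup_coeff (fps_iter p n))
       \<and> (\<lambda>n. sup_coeff (fps_iter p n)) \<longlonglongrightarrow> 0"
proof -
  define P where "P = embed_pmf (\<lambda>k. fps_nth p k)"
  have pmfP: "pmf P k = fps_nth p k" for k
    unfolding P_def by (rule pmf_embed_from_sums) (use coeff_bounds coeff_sum in auto)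
  have link: "fps_nth (fps_iter p n) k = pmf (Zp P n) k" for n k
    by (rule fps_iter_pmf) (simp add: pmfP)
  have sup: "sup_coeff (fps_iter p n) = bZ P n" for n
    by (simp add: sup_coeff_def bZ_def link)
  have lt1: "pmf P k < 1" for k using coeff_bounds by (simp add: pmfP)
  obtain u where u: "u \<in> set_pmf P" using set_pmf_not_empty[of P] by blast
  obtain v where v: "v \<in> set_pmf P" "v \<noteq> u"
  proof -
    have "\<not> set_pmf P \<subseteq> {u}"
    proof
      assume "set_pmf P \<subseteq> {u}"
      then have "P = return_pmf u" by (simp add: set_pmf_subset_singleton)
      then show False using lt1[of u] by (simp add: pmf_return)
    qed
    then show ?thesis using that by blast
  qed
  define u' where "u' = min u v"
  define v' where "v' = max u v"
  have uv: "u' < v'" "0 < pmf P u'" "0 < pmf P v'"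
    using u v by (auto simp: u'_def v'_def min_def max_def pmf_positive)
  show ?thesis
  proof (intro conjI allI impI)
    fix n :: nat
    show "fps_nth (fps_iter p n) 0 \<le> fps_nth (fps_iter p (Suc n)) 0"
      by (simp only: link q0_mono)
    show "sup_coeff (fps_iter p (Suc n)) \<le> sup_coeff (fps_iter p n)"
      by (simp only: sup bZ_mono[OF lt1])
  next
    show "(\<lambda>n. sup_coeff (fps_iter p n)) \<longlonglongrightarrow> 0"
      by (simp only: sup bZ_tendsto[OF uv lt1])
  qed
qed

end
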